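(* Let Assumptions (A) hold, $\ell>0$, $x_0\in\mathcal H^s_\cap$, and consider the RWM chain at step $k$. Conditionally on $x_k$ (the randomness being that of $\xi_{k+1}^N$), $$\mathrm{Wass}(R,G)\lesssim\frac1{\sqrt N},\qquad\mathrm{Wass}(G,Z_{\ell,k})\lesssim\frac{\sqrt{1+\|x_k\|_s^2}}{\sqrt N},$$ and consequently $\mathrm{Wass}(R,Z_{\ell,k})\le\mathbb E|R-Z_{\ell,k}|\lesssim\frac{\sqrt{1+\|x_k\|_s^2}}{\sqrt N}$, with implicit constants independent of $N$, $k$ and $x_k$.
   Context: $\mathcal H$, $\mathcal C$, $\phi_j$, $\lambda_j^2$, $x^j=\langle x,\phi_j\rangle$, $\mathcal H^r$ (norm $\|x\|_r^2=\sum_jj^{2r}(x^j)^2$), $(\mathcal H^s)^*\cong\mathcal H^{-s}$; $\mathcal P^N$ projection onto $\mathrm{span}\{\phi_1..\phi_N\}$, $x^N=\mathcal P^Nx$. Assumptions (A): (1) $\lambda_j\asymp j^{-\kappa}$, $\kappa>1/2$; (2) $\Psi:\mathcal H^s\to\mathbb R$ defined everywhere, $s\in[0,\kappa-1/2)$; (3) $0\le\Psi(x)\lesssim1+\|x\|_s^2$; (4) $\|\nabla\Psi(x)\|_{-s}\lesssim1+\|x\|_s$, $\|\partial^2\Psi(x)\|_{\mathcal L(\mathcal H^s,\mathcal H^{-s})}\lesssim1$. RWM chain started at $x_0$: given $x_k$, $\xi^N_{k+1}=\sum_{i\le N}\xi^{i,N}_{k+1}\phi_i$ (i.i.d. $\mathcal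 N(0,1)$, independent of past), $y_{k+1}=x_k+\sqrt{2\ell^2/N}\mathcal C^{1/2}\xi^N_{k+1}$, $Q_k=\frac12\sum_{i\le N}|x^i_k|^2/\lambda_i^2-\frac12\sum_{i\le N}|y^i_{k+1}|^2/\lambda_i^2+\Psi(x^N_k)-\Psi(y^N_{k+1})$, $\gamma_{k+1}\sim$ Bernoulli$(1\wedge e^{Q_k})$, $x_{k+1}=x_k+\gamma_{k+1}\sqrt{2\ell^2/N}\mathcal C^{1/2}\xi^N_{k+1}$. Define $\zeta^N_k=\mathcal C^{-1/2}x^N_k+\mathcal C^{1/2}\mathcal P^N(\nabla\Psi(x^N_k))$ with components $\zeta^{j,N}_k$, and $R=-\frac{\ell^2}N\sum_{i=1}^N|\xi^{i,N}_{k+1}|^2-\sqrt{\frac{2\ell^2}N}\sum_{j=1}^N\zeta^{j,N}_k\xi^{j,N}_{k+1}$, $G=-\ell^2-\sqrt{\frac{2\ell^2}N}\sum_{j=1}^N\zeta^{j,N}_k\xi^{j,N}_{k+1}$, $Z_{\ell,k}=-\ell^2-\sqrt{\frac{2\ell^2}N}\sum_{j=1}^N\frac{x^j_k}{\lambda_j}\xi^{j,N}_{k+1}$. Wasserstein distance: $\mathrm{Wass}(X,Y)=\sup_{f\ \text{1-Lipschitz}}\mathbb E(f(X)-f(Y))$. $\mathcal H^s_\cap=\{x\in\mathcal H^s:\lim_N\frac1N\sum_{i\le N}|x^i|^2/\lambda_i^2\text{ exists and is finite}\}$. *)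

theory Defs
  imports "HOL-Probability.Probability"
begin

text \<open>Coordinates: an element x of H is represented by its coordinate sequence
  j \<mapsto> x^{j+1} = <x, phi_{j+1}> (0-based indexing: index j stands for phi_{j+1}).
  lam j stands for lambda_{j+1}.\<close>

definition hnorm :: "real \<Rightarrow> (nat \<Rightarrow> real) \<Rightarrow> real" where
  "hnorm r x = sqrt (\<Sum>j. real (Suc j) powr (2 * r) * (x j)\<^sup>2)"

definition Hsp :: "real \<Rightarrow> (nat \<Rightarrow> real) set" where
  "Hsp r = {x. summable (\<lambda>j. real (Suc j) powr (2 * r) * (x j)\<^sup>2)}"

definition pairing :: "(nat \<Rightarrow> real) \<Rightarrow> (nat \<Rightarrow> real) \<Rightarrow> real" where
  "pairing g h = (\<Sum>j. g j * h j)"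

definition Hcap :: "real \<Rightarrow> (nat \<Rightarrow> real) \<Rightarrow> (nat \<Rightarrow> real) set" where
  "Hcap s lam = {x \<in> Hsp s.
     convergent (\<lambda>N. (1 / real N) * (\<Sum>i<N. (x i)\<^sup>2 / (lam i)\<^sup>2))}"

definition is_gradient :: "real \<Rightarrow> ((nat \<Rightarrow> real) \<Rightarrow> real) \<Rightarrow> (nat \<Rightarrow> real) \<Rightarrow> (nat \<Rightarrow> real) \<Rightarrow> bool" where
  "is_gradient s Psi x g \<longleftrightarrow> g \<in> Hsp (-s) \<and>
     (\<forall>e>0. \<exists>d>0. \<forall>h\<in>Hsp s. hnorm s h < d \<longrightarrow>
        \<bar>Psi (\<lambda>j. x j + h j) - Psi x - pairing g h\<bar> \<le> e * hnorm s h)"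

definition bdd_op :: "real \<Rightarrow> real \<Rightarrow> ((nat \<Rightarrow> real) \<Rightarrow> (nat \<Rightarrow> real)) \<Rightarrow> bool" where
  "bdd_op s K D \<longleftrightarrow>
     (\<forall>a b h1 h2. h1 \<in> Hsp s \<longrightarrow> h2 \<in> Hsp s \<longrightarrow>
        D (\<lambda>j. a * h1 j + b * h2 j) = (\<lambda>j. a * D h1 j + b * D h2 j)) \<and>
     (\<forall>h\<in>Hsp s. D h \<in> Hsp (-s) \<and> hnorm (-s) (D h) \<le> K * hnorm s h)"

definition is_hessian :: "real \<Rightarrow> ((nat \<Rightarrow> real) \<Rightarrow> (nat \<Rightarrow> real)) \<Rightarrow> (nat \<Rightarrow> real) \<Rightarrow>
    ((nat \<Rightarrow> real) \<Rightarrow> (nat \<Rightarrow> real)) \<Rightarrow> bool" where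
  "is_hessian s grad x D \<longleftrightarrow>
     (\<forall>e>0. \<exists>d>0. \<forall>h\<in>Hsp s. hnorm s h < d \<longrightarrow>
        hnorm (-s) (\<lambda>j. grad (\<lambda>i. x i + h i) j - grad x j - D h j) \<le> e * hnorm s h)"

definition projN :: "nat \<Rightarrow> (nat \<Rightarrow> real) \<Rightarrow> (nat \<Rightarrow> real)" where
  "projN N x = (\<lambda>j. if j < N then x j else 0)"

definition xi_space :: "nat \<Rightarrow> (nat \<Rightarrow> real) measure" where
  "xi_space N = PiM {..<N} (\<lambda>_. density lborel std_normal_density)"

definition zeta :: "(nat \<Rightarrow> real) \<Rightarrow> ((nat \<Rightarrow> real) \<Rightarrow> (nat \<Rightarrow> real)) \<Rightarrow> nat \<Rightarrow> (nat \<Rightarrow> real) \<Rightarrow> nat \<Rightarrow> real" where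
  "zeta lam grad N x j = projN N x j / lam j + lam j * grad (projN N x) j"

definition R_var :: "(nat \<Rightarrow> real) \<Rightarrow> ((nat \<Rightarrow> real) \<Rightarrow> (nat \<Rightarrow> real)) \<Rightarrow> real \<Rightarrow> nat \<Rightarrow> (nat \<Rightarrow> real) \<Rightarrow> (nat \<Rightarrow> real) \<Rightarrow> real" where
  "R_var lam grad l N x xi = - (l\<^sup>2 / real N) * (\<Sum>i<N. (xi i)\<^sup>2)
      - sqrt (2 * l\<^sup>2 / real N) * (\<Sum>j<N. zeta lam grad N x j * xi j)"

definition G_var :: "(nat \<Rightarrow> real) \<Rightarrow> ((nat \<Rightarrow> real) \<Rightarrow> (nat \<Rightarrow> real)) \<Rightarrow> real \<Rightarrow> nat \<Rightarrow> (nat \<Rightarrow> real) \<Rightarrow> (nat \<Rightarrow> real) \<Rightarrow> real" where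
  "G_var lam grad l N x xi = - l\<^sup>2
      - sqrt (2 * l\<^sup>2 / real N) * (\<Sum>j<N. zeta lam grad N x j * xi j)"

definition Z_var :: "(nat \<Rightarrow> real) \<Rightarrow> real \<Rightarrow> nat \<Rightarrow> (nat \<Rightarrow> real) \<Rightarrow> (nat \<Rightarrow> real) \<Rightarrow> real" where
  "Z_var lam l N x xi = - l\<^sup>2 - sqrt (2 * l\<^sup>2 / real N) * (\<Sum>j<N. x j / lam j * xi j)"

definition wass :: "'a measure \<Rightarrow> ('a \<Rightarrow> real) \<Rightarrow> ('a \<Rightarrow> real) \<Rightarrow> ereal" where
  "wass M X Y = (SUP f \<in> {f :: real \<Rightarrow> real. lipschitz_on 1 UNIV f}.
      ereal (\<integral>\<omega>. f (X \<omega>) - f (Y \<omega>) \<partial>M))"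

end

theory Submission
  imports Defs
begin

abbreviation G0 :: "real measure" where "G0 \<equiv> density lborel std_normal_density"

lemma G0_prob: "prob_space G0"
  by (rule prob_space_normal_density) simp

lemma G0_pow: "integrable G0 (\<lambda>x. x ^ k)"
  by (subst integrable_density) (auto simp: normal_density_nonneg integrable_std_normal_moment)

lemma G0_pow_int: "(\<integral>x. x ^ k \<partial>G0) = (\<integral>x. std_normal_density x * x ^ k \<partial>lborel)"
  by (subst integral_density) (auto simp: normal_density_nonneg)

lemma G0_m1: "(\<integral>x. x \<partial>G0) = 0"
  using G0_pow_int[of 1] integral_std_normal_moment_odd[of 0] by simp

lemma G0_m2: "(\<integral>x. x^2 \<partial>G0) = 1"
  using G0_pow_int[of 2] integral_std_normal_moment_even[of 1] by simp

lemma G0_m4: "(\<integral>x. x^4 \<partial>G0) = 3"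
  using G0_pow_int[of 4] integral_std_normal_moment_even[of 2] by (simp add: fact_numeral)

lemma G0_one: "(\<integral>x. 1 \<partial>G0) = (1::real)" "integrable G0 (\<lambda>x. 1::real)"
proof -
  interpret prob_space G0 by (rule G0_prob)
  show "(\<integral>x. 1 \<partial>G0) = (1::real)" "integrable G0 (\<lambda>x. 1::real)" using prob_space lebesgue_integral_const[of G0 "1::real"] by auto
qed


lemma xi_prod:
  fixes f g :: "real \<Rightarrow> real"
  assumes f: "integrable G0 f" and g: "integrable G0 g" and fg: "integrable G0 (\<lambda>t. f t * g t)"
    and i: "i < N" and j: "j < N"
  shows "integrable (xi_space N) (\<lambda>\<xi>. f (\<xi> i) * g (\<xi> j)) \<and>
    (\<integral>\<xi>. f (\<xi> i) * g (\<xi> j) \<partial>xi_space N) =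
      (if i = j then (\<integral>t. f t * g t \<partial>G0) else (\<integral>t. f t \<partial>G0) * (\<integral>t. g t \<partial>G0))"
proof -
  interpret P: product_prob_space "\<lambda>_::nat. G0" "{..<N}"
    by (intro product_prob_space.intro product_sigma_finite.intro product_prob_space_axioms.intro
        G0_prob prob_space_imp_sigma_finite)
  have fin: "finite {..<N}" by simp
  show ?thesis
  proof (cases "i = j")
    case True
    define F where "F = (\<lambda>k. if k = i then (\<lambda>t. f t * g t) else (\<lambda>_::real. 1::real))"
    have intF: "\<And>k. integrable G0 (F k)" using fg G0_one by (auto simp: F_def)
    have eq: "\<And>\<xi>. (\<Prod>k\<in>{..<N}. F k (\<xi> k)) = f (\<xi> i) * g (\<xi> j)"
      using i True by (subst prod.remove[of _ i]) (auto simp: F_def)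
    have "integrable (xi_space N) (\<lambda>\<xi>. \<Prod>k\<in>{..<N}. F k (\<xi> k))"
      unfolding xi_space_def using intF by (intro P.product_integrable_prod) auto
    moreover have "(\<integral>\<xi>. (\<Prod>k\<in>{..<N}. F k (\<xi> k)) \<partial>xi_space N) = (\<Prod>k\<in>{..<N}. integral\<^sup>L G0 (F k))"
      unfolding xi_space_def using intF by (intro P.product_integral_prod) auto
    moreover have "(\<Prod>k\<in>{..<N}. integral\<^sup>L G0 (F k)) = (\<integral>t. f t * g t \<partial>G0)"
      using i G0_one by (subst prod.remove[of _ i]) (auto simp: F_def)
    ultimately show ?thesis using True by (simp add: eq)
  next
    case False
    define F where "F = (\<lambda>k. if k = i then f else if k = j then g else (\<lambda>_::real. 1::real))"
    have intF: "\<And>k. integrable G0 (F k)" using f g G0_one by (auto simp: F_def)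
    have eq: "\<And>\<xi>. (\<Prod>k\<in>{..<N}. F k (\<xi> k)) = f (\<xi> i) * g (\<xi> j)"
    proof -
      fix \<xi> :: "nat \<Rightarrow> real"
      have "(\<Prod>k\<in>{..<N}. F k (\<xi> k)) = F i (\<xi> i) * (\<Prod>k\<in>{..<N}-{i}. F k (\<xi> k))"
        using i by (simp add: prod.remove)
      also have "(\<Prod>k\<in>{..<N}-{i}. F k (\<xi> k)) = F j (\<xi> j) * (\<Prod>k\<in>{..<N}-{i}-{j}. F k (\<xi> k))"
        using j False by (intro prod.remove) auto
      also have "(\<Prod>k\<in>{..<N}-{i}-{j}. F k (\<xi> k)) = 1"
        by (intro prod.neutral) (auto simp: F_def)
      finally show "(\<Prod>k\<in>{..<N}. F k (\<xi> k)) = f (\<xi> i) * g (\<xi> j)" using False by (simp add: F_def)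
    qed
    have "integrable (xi_space N) (\<lambda>\<xi>. \<Prod>k\<in>{..<N}. F k (\<xi> k))"
      unfolding xi_space_def using intF by (intro P.product_integrable_prod) auto
    moreover have "(\<integral>\<xi>. (\<Prod>k\<in>{..<N}. F k (\<xi> k)) \<partial>xi_space N) = (\<Prod>k\<in>{..<N}. integral\<^sup>L G0 (F k))"
      unfolding xi_space_def using intF by (intro P.product_integral_prod) auto
    moreover have "(\<Prod>k\<in>{..<N}. integral\<^sup>L G0 (F k)) = (\<integral>t. f t \<partial>G0) * (\<integral>t. g t \<partial>G0)"
    proof -
      have "(\<Prod>k\<in>{..<N}. integral\<^sup>L G0 (F k)) = integral\<^sup>L G0 (F i) * (\<Prod>k\<in>{..<N}-{i}. integral\<^sup>L G0 (F k))"
        using i by (simp add: prod.remove)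
      also have "(\<Prod>k\<in>{..<N}-{i}. integral\<^sup>L G0 (F k)) = integral\<^sup>L G0 (F j) * (\<Prod>k\<in>{..<N}-{i}-{j}. integral\<^sup>L G0 (F k))"
        using j False by (intro prod.remove) auto
      also have "(\<Prod>k\<in>{..<N}-{i}-{j}. integral\<^sup>L G0 (F k)) = 1"
        using G0_one by (intro prod.neutral) (auto simp: F_def)
      finally show ?thesis using False by (simp add: F_def)
    qed
    ultimately show ?thesis using False by (simp add: eq)
  qed
qed


lemma xi_prob: "prob_space (xi_space N)"
proof -
  interpret P: product_prob_space "\<lambda>_::nat. G0" "{..<N}"
    by (intro product_prob_space.intro product_sigma_finite.intro product_prob_space_axioms.intro
        G0_prob prob_space_imp_sigma_finite)
  show ?thesis unfolding xi_space_def by (rule P.prob_space_axioms)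
qed

lemma comp_meas:
  assumes "h \<in> borel_measurable G0" "i < N"
  shows "(\<lambda>\<xi>. h (\<xi> i)) \<in> borel_measurable (xi_space N)"
proof -
  have "(\<lambda>\<xi>. \<xi> i) \<in> measurable (xi_space N) G0"
    unfolding xi_space_def using measurable_component_singleton[of i "{..<N}" "\<lambda>_. G0"] assms(2) by simp
  then show ?thesis using assms(1) by (rule measurable_compose)
qed

lemma sum_sq:
  fixes h :: "real \<Rightarrow> real" and a :: "nat \<Rightarrow> real"
  assumes h: "integrable G0 h" "integrable G0 (\<lambda>t. h t * h t)"
    "(\<integral>t. h t \<partial>G0) = 0" "(\<integral>t. h t * h t \<partial>G0) = v"
  shows "integrable (xi_space N) (\<lambda>\<xi>. (\<Sum>i<N. a i * h (\<xi> i))^2) \<and>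
    (\<integral>\<xi>. (\<Sum>i<N. a i * h (\<xi> i))^2 \<partial>xi_space N) = v * (\<Sum>i<N. (a i)^2)"
proof -
  have eq: "\<And>\<xi>. (\<Sum>i<N. a i * h (\<xi> i))^2 = (\<Sum>i<N. \<Sum>j<N. a i * a j * (h (\<xi> i) * h (\<xi> j)))"
    by (simp add: power2_eq_square sum_product algebra_simps)
  have P: "\<And>i j. i \<in> {..<N} \<Longrightarrow> j \<in> {..<N} \<Longrightarrow> integrable (xi_space N) (\<lambda>\<xi>. h (\<xi> i) * h (\<xi> j)) \<and>
    (\<integral>\<xi>. h (\<xi> i) * h (\<xi> j) \<partial>xi_space N) = (if i = j then v else 0)"
    using xi_prod[OF h(1) h(1) h(2)] h(3,4) by auto
  have int: "integrable (xi_space N) (\<lambda>\<xi>. \<Sum>i<N. \<Sum>j<N. a i * a j * (h (\<xi> i) * h (\<xi> j)))"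
    using P by (intro Bochner_Integration.integrable_sum integrable_mult_right) auto
  have "(\<integral>\<xi>. (\<Sum>i<N. \<Sum>j<N. a i * a j * (h (\<xi> i) * h (\<xi> j))) \<partial>xi_space N)
      = (\<Sum>i<N. \<Sum>j<N. a i * a j * (if i = j then v else 0))"
  proof -
    have "(\<integral>\<xi>. (\<Sum>i<N. \<Sum>j<N. a i * a j * (h (\<xi> i) * h (\<xi> j))) \<partial>xi_space N)
       = (\<Sum>i<N. (\<integral>\<xi>. (\<Sum>j<N. a i * a j * (h (\<xi> i) * h (\<xi> j))) \<partial>xi_space N))"
      using P by (intro Bochner_Integration.integral_sum Bochner_Integration.integrable_sum integrable_mult_right) auto
    also have "\<dots> = (\<Sum>i<N. \<Sum>j<N. (\<integral>\<xi>. a i * a j * (h (\<xi> i) * h (\<xi> j)) \<partial>xi_space N))"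
      using P by (intro sum.cong refl Bochner_Integration.integral_sum integrable_mult_right) auto
    also have "\<dots> = (\<Sum>i<N. \<Sum>j<N. a i * a j * (if i = j then v else 0))"
      using P by (intro sum.cong refl) (simp add: integral_mult_right_zero)
    finally show ?thesis .
  qed
  also have "\<dots> = v * (\<Sum>i<N. (a i)^2)"
    by (simp add: sum_distrib_left power2_eq_square if_distrib sum.delta cong: if_cong) (simp add: algebra_simps)
  finally show ?thesis using int by (simp add: eq)
qed


lemma abs_bound:
  fixes h :: "real \<Rightarrow> real" and a :: "nat \<Rightarrow> real"
  assumes h: "integrable G0 h" "integrable G0 (\<lambda>t. h t * h t)"
    "(\<integral>t. h t \<partial>G0) = 0" "(\<integral>t. h t * h t \<partial>G0) = v"
    and B: "v * (\<Sum>i<N. (a i)^2) \<le> B^2" "B > 0"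
  shows "integrable (xi_space N) (\<lambda>\<xi>. \<Sum>i<N. a i * h (\<xi> i)) \<and>
    (\<integral>\<xi>. \<bar>\<Sum>i<N. a i * h (\<xi> i)\<bar> \<partial>xi_space N) \<le> B"
proof -
  interpret prob_space "xi_space N" by (rule xi_prob)
  let ?Y = "\<lambda>\<xi>. \<Sum>i<N. a i * h (\<xi> i)"
  note S = sum_sq[OF h, of N a]
  have hm: "h \<in> borel_measurable G0" using h(1) by auto
  have Ym: "?Y \<in> borel_measurable (xi_space N)"
    using comp_meas[OF hm] by (intro borel_measurable_sum borel_measurable_times) auto
  have I2: "integrable (xi_space N) (\<lambda>\<xi>. ((?Y \<xi>)^2 + B^2) / (2*B))"
    using S by (intro integrable_divide Bochner_Integration.integrable_add) auto
  have pt: "\<And>\<xi>. \<bar>?Y \<xi>\<bar> \<le> ((?Y \<xi>)^2 + B^2) / (2*B)"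
  proof -
    fix \<xi>
    have "0 \<le> (\<bar>?Y \<xi>\<bar> - B)^2" by simp
    hence "2*B*\<bar>?Y \<xi>\<bar> \<le> (?Y \<xi>)^2 + B^2" by (simp add: power2_eq_square algebra_simps)
    thus "\<bar>?Y \<xi>\<bar> \<le> ((?Y \<xi>)^2 + B^2) / (2*B)" using B(2) by (simp add: field_simps)
  qed
  have intY: "integrable (xi_space N) ?Y"
    using I2 Ym pt by (intro Bochner_Integration.integrable_bound[OF I2 Ym]) (use B(2) in \<open>auto intro!: AE_I2 order_trans[OF pt]\<close>)
  have "(\<integral>\<xi>. \<bar>?Y \<xi>\<bar> \<partial>xi_space N) \<le> (\<integral>\<xi>. ((?Y \<xi>)^2 + B^2) / (2*B) \<partial>xi_space N)"
    using intY I2 pt by (intro integral_mono) auto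
  also have "\<dots> = (v * (\<Sum>i<N. (a i)^2) + B^2) / (2*B)"
    using S prob_space by (simp add: Bochner_Integration.integral_add)
  also have "\<dots> \<le> (B^2 + B^2) / (2*B)"
    using B by (intro divide_right_mono) auto
  also have "\<dots> = B" using B(2) by (simp add: power2_eq_square)
  finally show ?thesis using intY by simp
qed

lemma wass_le:
  assumes "integrable M (\<lambda>\<omega>. X \<omega> - Y \<omega>)"
  shows "wass M X Y \<le> ereal (\<integral>\<omega>. \<bar>X \<omega> - Y \<omega>\<bar> \<partial>M)"
  unfolding wass_def
proof (rule SUP_least)
  fix f :: "real \<Rightarrow> real" assume "f \<in> {f. lipschitz_on 1 UNIV f}"
  hence L: "\<And>a b. \<bar>f a - f b\<bar> \<le> \<bar>a - b\<bar>"
    using lipschitz_onD[of 1 UNIV f] by (simp add: dist_real_def)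
  have "(\<integral>\<omega>. f (X \<omega>) - f (Y \<omega>) \<partial>M) \<le> (\<integral>\<omega>. \<bar>X \<omega> - Y \<omega>\<bar> \<partial>M)"
  proof (cases "integrable M (\<lambda>\<omega>. f (X \<omega>) - f (Y \<omega>))")
    case True
    show ?thesis using True assms L by (intro integral_mono) (auto intro: order_trans[OF abs_ge_self])
  next
    case False
    thus ?thesis by (simp add: not_integrable_integral_eq)
  qed
  thus "ereal (\<integral>\<omega>. f (X \<omega>) - f (Y \<omega>) \<partial>M) \<le> ereal (\<integral>\<omega>. \<bar>X \<omega> - Y \<omega>\<bar> \<partial>M)" by simp
qed


lemma h1_facts: "integrable G0 (\<lambda>t. t)" "integrable G0 (\<lambda>t. t * t)"
  "(\<integral>t. t \<partial>G0) = 0" "(\<integral>t. t * t \<partial>G0) = 1"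
  using G0_pow[of 1] G0_pow[of 2] G0_m1 G0_m2 by (auto simp: power2_eq_square)

lemma h2_facts: "integrable G0 (\<lambda>t. t * t - 1)" "integrable G0 (\<lambda>t. (t * t - 1) * (t * t - 1))"
  "(\<integral>t. t * t - 1 \<partial>G0) = 0" "(\<integral>t. (t * t - 1) * (t * t - 1) \<partial>G0) = 2"
proof -
  have e: "\<And>t::real. (t * t - 1) * (t * t - 1) = t^4 - 2 * t^2 + 1"
    by (simp add: power2_eq_square power4_eq_xxxx algebra_simps)
  have i2: "integrable G0 (\<lambda>t. t * t)" using G0_pow[of 2] by (simp add: power2_eq_square)
  have m2: "(\<integral>t. t * t \<partial>G0) = 1" using G0_m2 by (simp add: power2_eq_square)
  show "integrable G0 (\<lambda>t. t * t - 1)" using i2 G0_one by auto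
  show "integrable G0 (\<lambda>t. (t * t - 1) * (t * t - 1))" unfolding e
    using G0_pow[of 4] G0_pow[of 2] G0_one by auto
  show "(\<integral>t. t * t - 1 \<partial>G0) = 0" using i2 G0_one m2 by simp
  show "(\<integral>t. (t * t - 1) * (t * t - 1) \<partial>G0) = 2" unfolding e
    using G0_pow[of 4] G0_pow[of 2] G0_one G0_m4 G0_m2 by simp
qed

lemma hnorm_nonneg: "x \<in> Hsp r \<Longrightarrow> 0 \<le> hnorm r x"
  unfolding hnorm_def Hsp_def by (auto intro!: suminf_nonneg)

lemma hnorm_proj:
  assumes "x \<in> Hsp s"
  shows "projN N x \<in> Hsp s \<and> hnorm s (projN N x) \<le> hnorm s x"
proof -
  let ?f = "\<lambda>j. real (Suc j) powr (2 * s) * (x j)\<^sup>2"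
  let ?g = "\<lambda>j. real (Suc j) powr (2 * s) * (projN N x j)\<^sup>2"
  have sf: "summable ?f" using assms by (simp add: Hsp_def)
  have le: "\<And>j. ?g j \<le> ?f j" "\<And>j. 0 \<le> ?g j" by (auto simp: projN_def)
  have sg: "summable ?g" using sf le by (intro summable_comparison_test'[OF sf]) auto
  have "suminf ?g \<le> suminf ?f" using sf sg le by (intro suminf_le) auto
  then show ?thesis using sg by (simp add: Hsp_def hnorm_def)
qed

lemma lam_sum:
  fixes g :: "nat \<Rightarrow> real"
  assumes g: "g \<in> Hsp (-s)" and lam: "\<And>j. 0 < lam j" "\<And>j. lam j \<le> c2 * real (Suc j) powr (- kappa)"
    and sk: "s \<le> kappa" and c2: "0 < c2"
  shows "(\<Sum>j<N. (lam j * g j)^2) \<le> c2^2 * (hnorm (-s) g)^2"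
proof -
  let ?f = "\<lambda>j. real (Suc j) powr (2 * (-s)) * (g j)\<^sup>2"
  have sf: "summable ?f" using g by (simp add: Hsp_def)
  have pt: "(lam j * g j)^2 \<le> c2^2 * ?f j" for j
  proof -
    have "real (Suc j) powr (- kappa) \<le> real (Suc j) powr (- s)"
      using sk by (intro powr_mono) auto
    hence "lam j \<le> c2 * real (Suc j) powr (- s)" using lam(2)[of j] c2
      by (meson mult_left_mono less_imp_le order_trans)
    hence "(lam j)^2 \<le> (c2 * real (Suc j) powr (- s))^2" using lam(1)[of j]
      by (intro power_mono) auto
    also have "\<dots> = c2^2 * real (Suc j) powr (2 * (-s))"
      by (simp add: power_mult_distrib powr_powr[symmetric] power2_eq_square powr_add[symmetric])
    finally have "(lam j)^2 \<le> c2^2 * real (Suc j) powr (2 * (-s))" .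
    hence "(lam j)^2 * (g j)^2 \<le> c2^2 * real (Suc j) powr (2 * (-s)) * (g j)^2"
      by (intro mult_right_mono) auto
    thus ?thesis by (simp add: power_mult_distrib mult.assoc)
  qed
  have "(\<Sum>j<N. (lam j * g j)^2) \<le> (\<Sum>j<N. c2^2 * ?f j)" using pt by (intro sum_mono) auto
  also have "\<dots> = c2^2 * (\<Sum>j<N. ?f j)" by (simp add: sum_distrib_left)
  also have "(\<Sum>j<N. ?f j) \<le> suminf ?f" using sf by (intro sum_le_suminf) auto
  also have "suminf ?f = (hnorm (-s) g)^2"
    unfolding hnorm_def using sf by (subst real_sqrt_pow2) (auto intro!: suminf_nonneg)
  finally show ?thesis by (simp add: mult_left_mono)
qed

theorem lemma7p5:
  fixes lam :: "nat \<Rightarrow> real" and kappa s l :: real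
    and Psi :: "(nat \<Rightarrow> real) \<Rightarrow> real"
    and grad :: "(nat \<Rightarrow> real) \<Rightarrow> (nat \<Rightarrow> real)"
  assumes A1_kappa: "kappa > 1/2"
    and A1_lam: "\<exists>c1 c2. 0 < c1 \<and> 0 < c2 \<and>
        (\<forall>j. c1 * real (Suc j) powr (- kappa) \<le> lam j \<and> lam j \<le> c2 * real (Suc j) powr (- kappa))"
    and A2: "0 \<le> s" "s < kappa - 1/2"
    and A3: "\<exists>K. \<forall>x\<in>Hsp s. 0 \<le> Psi x \<and> Psi x \<le> K * (1 + (hnorm s x)\<^sup>2)"
    and A4_grad: "\<forall>x\<in>Hsp s. is_gradient s Psi x (grad x)"
    and A4_gradbd: "\<exists>K. \<forall>x\<in>Hsp s. hnorm (-s) (grad x) \<le> K * (1 + hnorm s x)"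
    and A4_hess: "\<exists>K. \<forall>x\<in>Hsp s. \<exists>D. is_hessian s grad x D \<and> bdd_op s K D"
    and l_pos: "l > 0"
  shows "\<exists>C. \<forall>N\<ge>1. \<forall>x\<in>Hcap s lam.
      integrable (xi_space N) (\<lambda>xi. R_var lam grad l N x xi - G_var lam grad l N x xi) \<and>
      integrable (xi_space N) (\<lambda>xi. G_var lam grad l N x xi - Z_var lam l N x xi) \<and>
      integrable (xi_space N) (\<lambda>xi. R_var lam grad l N x xi - Z_var lam l N x xi) \<and>
      wass (xi_space N) (R_var lam grad l N x) (G_var lam grad l N x)
        \<le> ereal (C / sqrt (real N)) \<and>
      wass (xi_space N) (G_var lam grad l N x) (Z_var lam l N x)
        \<le> ereal (C * sqrt (1 + (hnorm s x)\<^sup>2) / sqrt (real N)) \<and>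
      wass (xi_space N) (R_var lam grad l N x) (Z_var lam l N x)
        \<le> ereal (\<integral>xi. \<bar>R_var lam grad l N x xi - Z_var lam l N x xi\<bar> \<partial>xi_space N) \<and>
      (\<integral>xi. \<bar>R_var lam grad l N x xi - Z_var lam l N x xi\<bar> \<partial>xi_space N)
        \<le> C * sqrt (1 + (hnorm s x)\<^sup>2) / sqrt (real N)"
proof -
  obtain c1 c2 where c: "0 < c1" "0 < c2"
    "\<And>j. c1 * real (Suc j) powr (- kappa) \<le> lam j" "\<And>j. lam j \<le> c2 * real (Suc j) powr (- kappa)"
    using A1_lam by blast
  have lampos: "\<And>j. 0 < lam j"
  proof -
    fix j
    have "0 < c1 * real (Suc j) powr (- kappa)" using c(1) by simp
    thus "0 < lam j" using c(3)[of j] by linarith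
  qed
  obtain K0 where K0: "\<And>x. x \<in> Hsp s \<Longrightarrow> hnorm (-s) (grad x) \<le> K0 * (1 + hnorm s x)"
    using A4_gradbd by blast
  define K where "K = max K0 1"
  have K1: "K \<ge> 1" by (simp add: K_def)
  have Kb: "\<And>x. x \<in> Hsp s \<Longrightarrow> hnorm (-s) (grad x) \<le> K * (1 + hnorm s x)"
  proof -
    fix x assume xh: "x \<in> Hsp s"
    have h0: "0 \<le> hnorm s x" using xh by (rule hnorm_nonneg)
    have "K0 * (1 + hnorm s x) \<le> K * (1 + hnorm s x)"
      using h0 by (intro mult_right_mono) (auto simp: K_def)
    thus "hnorm (-s) (grad x) \<le> K * (1 + hnorm s x)" using K0[OF xh] by linarith
  qed
  define C where "C = l^2 * sqrt 2 + 2 * l * c2 * K"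
  show ?thesis
  proof (intro exI[of _ C] allI impI ballI)
    fix N :: nat and x assume N: "N \<ge> 1" and x: "x \<in> Hcap s lam"
    have xs: "x \<in> Hsp s" using x by (simp add: Hcap_def)
    define H where "H = hnorm s x"
    have H0: "0 \<le> H" using xs by (simp add: H_def hnorm_nonneg)
    define g where "g = grad (projN N x)"
    have pr: "projN N x \<in> Hsp s" "hnorm s (projN N x) \<le> H"
      using hnorm_proj[OF xs, of N] by (auto simp: H_def)
    have gH: "g \<in> Hsp (-s)" using A4_grad pr(1) by (simp add: g_def is_gradient_def)
    have gb: "hnorm (-s) g \<le> K * (1 + H)"
    proof -
      have "K * (1 + hnorm s (projN N x)) \<le> K * (1 + H)" using pr(2) K1 by (intro mult_left_mono) auto
      thus ?thesis using Kb[OF pr(1)] unfolding g_def by linarith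
    qed
    have gb0: "0 \<le> hnorm (-s) g" using gH by (rule hnorm_nonneg)
    have Npos: "0 < real N" using N by simp
    have sN: "0 < sqrt (real N)" using Npos by simp
    define R where "R = R_var lam grad l N x"
    define G where "G = G_var lam grad l N x"
    define Z where "Z = Z_var lam l N x"
    define B1 where "B1 = l^2 * sqrt 2 / sqrt (real N)"
    have RG_eq: "\<And>\<xi>. R \<xi> - G \<xi> = (\<Sum>i<N. (- (l^2 / real N)) * (\<xi> i * \<xi> i - 1))"
    proof -
      fix \<xi> :: "nat \<Rightarrow> real"
      define c where "c = l^2 / real N"
      have "(\<Sum>i<N. (- c) * (\<xi> i * \<xi> i - 1)) = (\<Sum>i<N. c - c * (\<xi> i * \<xi> i))"
        by (intro sum.cong) (auto simp: algebra_simps)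
      also have "\<dots> = (\<Sum>i<N. c) - (\<Sum>i<N. c * (\<xi> i * \<xi> i))"
        by (rule sum_subtractf)
      also have "\<dots> = real N * c - c * (\<Sum>i<N. (\<xi> i)^2)"
        by (simp add: sum_distrib_left power2_eq_square)
      also have "real N * c = l^2" using Npos by (simp add: c_def)
      finally have "(\<Sum>i<N. (- (l^2 / real N)) * (\<xi> i * \<xi> i - 1))
          = - (l^2 / real N) * (\<Sum>i<N. (\<xi> i)^2) + l^2" by (simp add: c_def)
      thus "R \<xi> - G \<xi> = (\<Sum>i<N. (- (l^2 / real N)) * (\<xi> i * \<xi> i - 1))"
        by (simp add: R_def G_def R_var_def G_var_def)
    qed
    have B1pos: "0 < B1" using l_pos sN by (simp add: B1_def)
    have "2 * (\<Sum>i<N. (- (l^2 / real N))^2) \<le> B1^2"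
      using Npos by (simp add: B1_def power_divide power_mult_distrib power2_eq_square field_simps)
    note RGb = abs_bound[OF h2_facts this B1pos]
    have RG: "integrable (xi_space N) (\<lambda>\<xi>. R \<xi> - G \<xi>)" "(\<integral>\<xi>. \<bar>R \<xi> - G \<xi>\<bar> \<partial>xi_space N) \<le> B1"
      using RGb by (simp_all add: RG_eq)
    define B2 where "B2 = 2 * l * c2 * K * sqrt (1 + H^2) / sqrt (real N)"
    have GZ_eq: "\<And>\<xi>. G \<xi> - Z \<xi> = (\<Sum>i<N. (- sqrt (2 * l\<^sup>2 / real N) * (lam i * g i)) * \<xi> i)"
    proof -
      fix \<xi> :: "nat \<Rightarrow> real"
      define A where "A = (\<Sum>j<N. zeta lam grad N x j * \<xi> j)"
      define Bz where "Bz = (\<Sum>j<N. x j / lam j * \<xi> j)"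
      define D where "D = (\<Sum>j<N. lam j * g j * \<xi> j)"
      define c where "c = sqrt (2 * l\<^sup>2 / real N)"
      have "\<And>j. j < N \<Longrightarrow> zeta lam grad N x j * \<xi> j - x j / lam j * \<xi> j = lam j * g j * \<xi> j"
        by (simp add: zeta_def projN_def g_def algebra_simps)
      hence e: "A - Bz = D" unfolding A_def Bz_def D_def
        by (simp add: sum_subtractf[symmetric])
      have f: "(\<Sum>i<N. (- c * (lam i * g i)) * \<xi> i) = - c * D"
        unfolding D_def by (simp add: sum_distrib_left algebra_simps)
      have "G \<xi> - Z \<xi> = - c * (A - Bz)"
        unfolding G_def Z_def G_var_def Z_var_def A_def Bz_def c_def by (simp add: algebra_simps)
      thus "G \<xi> - Z \<xi> = (\<Sum>i<N. (- sqrt (2 * l\<^sup>2 / real N) * (lam i * g i)) * \<xi> i)"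
        using e f by (simp add: c_def)
    qed
    have B2pos: "0 < B2"
    proof -
      have "0 < sqrt (1 + H^2)" by (simp add: add_pos_nonneg)
      moreover have "0 < 2 * l * c2 * K" using l_pos c(2) K1 by simp
      ultimately show ?thesis using sN unfolding B2_def by (intro divide_pos_pos mult_pos_pos) (use l_pos c(2) K1 in auto)
    qed
    have S: "(\<Sum>j<N. (lam j * g j)^2) \<le> c2^2 * (hnorm (-s) g)^2"
      using lam_sum[OF gH lampos c(4) _ c(2)] A2 by simp
    also have "\<dots> \<le> c2^2 * (K * (1 + H))^2"
      using gb gb0 by (intro mult_left_mono power_mono) auto
    also have "\<dots> \<le> c2^2 * (K^2 * (2 * (1 + H^2)))"
    proof -
      have "0 \<le> (H - 1)^2" by simp
      hence "(1 + H)^2 \<le> 2 * (1 + H^2)" by (simp add: power2_eq_square algebra_simps)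
      thus ?thesis by (simp add: power_mult_distrib mult_left_mono)
    qed
    finally have S2: "(\<Sum>j<N. (lam j * g j)^2) \<le> 2 * c2^2 * K^2 * (1 + H^2)" by (simp add: algebra_simps)
    have "1 * (\<Sum>i<N. (- sqrt (2 * l\<^sup>2 / real N) * (lam i * g i))^2) \<le> B2^2"
    proof -
      have "(\<Sum>i<N. (- sqrt (2 * l\<^sup>2 / real N) * (lam i * g i))^2) = (2 * l^2 / real N) * (\<Sum>j<N. (lam j * g j)^2)"
        using Npos by (simp add: power_mult_distrib sum_distrib_left)
      also have "\<dots> \<le> (2 * l^2 / real N) * (2 * c2^2 * K^2 * (1 + H^2))"
        using S2 Npos by (intro mult_left_mono) auto
      also have "\<dots> = B2^2"
        using Npos H0 by (simp add: B2_def power_divide power_mult_distrib)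
      finally show ?thesis by simp
    qed
    note GZb = abs_bound[OF h1_facts this B2pos]
    have GZ: "integrable (xi_space N) (\<lambda>\<xi>. G \<xi> - Z \<xi>)" "(\<integral>\<xi>. \<bar>G \<xi> - Z \<xi>\<bar> \<partial>xi_space N) \<le> B2"
      using GZb by (simp_all add: GZ_eq)
    have RZe: "(\<lambda>\<xi>. R \<xi> - Z \<xi>) = (\<lambda>\<xi>. (R \<xi> - G \<xi>) + (G \<xi> - Z \<xi>))" by auto
    have RZi: "integrable (xi_space N) (\<lambda>\<xi>. R \<xi> - Z \<xi>)"
      unfolding RZe using RG(1) GZ(1) by (rule Bochner_Integration.integrable_add)
    have "(\<integral>\<xi>. \<bar>R \<xi> - Z \<xi>\<bar> \<partial>xi_space N) \<le> (\<integral>\<xi>. \<bar>R \<xi> - G \<xi>\<bar> + \<bar>G \<xi> - Z \<xi>\<bar> \<partial>xi_space N)"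
      using RZi RG(1) GZ(1) by (intro integral_mono) auto
    also have "\<dots> = (\<integral>\<xi>. \<bar>R \<xi> - G \<xi>\<bar> \<partial>xi_space N) + (\<integral>\<xi>. \<bar>G \<xi> - Z \<xi>\<bar> \<partial>xi_space N)"
      using RG(1) GZ(1) by (intro Bochner_Integration.integral_add) auto
    also have "\<dots> \<le> B1 + B2" using RG(2) GZ(2) by simp
    also have "\<dots> \<le> C * sqrt (1 + H^2) / sqrt (real N)"
    proof -
      have "1 \<le> sqrt (1 + H^2)" by simp
      hence "l^2 * sqrt 2 \<le> l^2 * sqrt 2 * sqrt (1 + H^2)" using l_pos by simp
      thus ?thesis using sN by (simp add: B1_def B2_def C_def divide_right_mono add_divide_distrib[symmetric] distrib_right)
    qed
    finally have RZ: "(\<integral>\<xi>. \<bar>R \<xi> - Z \<xi>\<bar> \<partial>xi_space N) \<le> C * sqrt (1 + H^2) / sqrt (real N)" .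
    have W1: "wass (xi_space N) R G \<le> ereal (C / sqrt (real N))"
    proof -
      have "B1 \<le> C / sqrt (real N)"
        using sN l_pos c(2) K1 by (simp add: B1_def C_def divide_right_mono)
      thus ?thesis using wass_le[OF RG(1)] RG(2) by (meson ereal_less_eq(3) order_trans)
    qed
    have W2: "wass (xi_space N) G Z \<le> ereal (C * sqrt (1 + H^2) / sqrt (real N))"
    proof -
      have "B2 \<le> C * sqrt (1 + H^2) / sqrt (real N)"
        using sN l_pos by (simp add: B2_def C_def divide_right_mono distrib_right)
      thus ?thesis using wass_le[OF GZ(1)] GZ(2) by (meson ereal_less_eq(3) order_trans)
    qed
    show "integrable (xi_space N) (\<lambda>xi. R_var lam grad l N x xi - G_var lam grad l N x xi) \<and>
      integrable (xi_space N) (\<lambda>xi. G_var lam grad l N x xi - Z_var lam l N x xi) \<and>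
      integrable (xi_space N) (\<lambda>xi. R_var lam grad l N x xi - Z_var lam l N x xi) \<and>
      wass (xi_space N) (R_var lam grad l N x) (G_var lam grad l N x)
        \<le> ereal (C / sqrt (real N)) \<and>
      wass (xi_space N) (G_var lam grad l N x) (Z_var lam l N x)
        \<le> ereal (C * sqrt (1 + (hnorm s x)\<^sup>2) / sqrt (real N)) \<and>
      wass (xi_space N) (R_var lam grad l N x) (Z_var lam l N x)
        \<le> ereal (\<integral>xi. \<bar>R_var lam grad l N x xi - Z_var lam l N x xi\<bar> \<partial>xi_space N) \<and>
      (\<integral>xi. \<bar>R_var lam grad l N x xi - Z_var lam l N x xi\<bar> \<partial>xi_space N)
        \<le> C * sqrt (1 + (hnorm s x)\<^sup>2) / sqrt (real N)"
      using RG(1) GZ(1) RZi W1 W2 wass_le[OF RZi] RZ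
      unfolding R_def G_def Z_def H_def by auto
  qed
qed

end
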